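(* Let $\Omega\subset\mathbb{R}^2$ be the unit disc, let $r_1,r_2\in(0,1)$ and $\sigma_1,\sigma_2>0$, and suppose that for every integer $n$ $$\det\begin{pmatrix}D_{1,0}(r_1,r_2)&\sigma_1I_n'(r_1/\sqrt{\sigma_1})&D_{1,1}(r_1,r_2)\\ I_n(r_2/\sqrt{\sigma_2})&0&\sigma_2I_n'(r_2/\sqrt{\sigma_2})\\ D(r_1,r_2)&I_n(r_1/\sqrt{\sigma_1})&D_{0,1}(r_1,r_2)\end{pmatrix}=0,$$ where $D$ and $D_{r,s}$ are taken with order $\nu=n$. Then $R_{\sigma_1,r_1}(g)=R_{\sigma_2,r_2}(g)$ for every $g\in H^{-1/2}(\partial\Omega)$.
   Context: $I_\nu,K_\nu$ are the modified Bessel functions of first and second kind of order $\nu$. For order $\nu$, $D(x,y)=I_\nu(x)K_\nu(y)-K_\nu(x)I_\nu(y)$ and $D_{r,s}(x,y)=\partial_x^r\partial_y^sD(x,y)$. Polar coordinates $(r,\phi)$; $g_n=(g,e^{in\phi})$. For $\rho\in(0,1)$ (core radius), $\sigma>0$, $g\in H^{-1/2}(\partial\Omega)$, let $\psi$ solve $\frac{1}{r}\partial_r(r\partial_r\psi)+\frac{1}{r^2}\partial_\phi^2\psi-\sigma^{-1}\psi=0$ for $0<r<\rho$; $\frac{1}{r}\partial_r(r\partial_r\psi)+\frac{1}{r^2}\partial_\phi^2\psi-\psi=0$ for $\rho<r<1$; $\psi|_{r=\rho}^+=\psi|_{r=\rho}^-$, $\partial_r\psi|_{r=\rho}^+=\sigma\,\partial_r\psi|_{r=\rho}^-$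 ($\pm$ = limits from outside/inside); $\partial_r\psi|_{r=1}=g$; $\psi$ bounded at $r=0$. The Neumann-to-Dirichlet map is $R_{\sigma,\rho}(g)=\psi|_{r=1}$; explicitly $R_{\sigma,\rho}(g)=\sum_{n\in\mathbb{Z}}\frac{I_n(\rho/\sqrt{\sigma})D_{0,1}(1,\rho)-\sigma I_n'(\rho/\sqrt{\sigma})D(1,\rho)}{I_n(\rho/\sqrt{\sigma})D_{1,1}(1,\rho)-\sigma I_n'(\rho/\sqrt{\sigma})D_{1,0}(1,\rho)}g_ne^{in\phi}$ (with $\nu=n$ in $D$). *)

theory Defs
  imports "HOL-Analysis.Analysis"
begin

definition besselI :: "int \<Rightarrow> real \<Rightarrow> real" where
  "besselI n x = (\<Sum>k. (x / 2) ^ (2 * k + nat \<bar>n\<bar>) / (fact k * fact (k + nat \<bar>n\<bar>)))"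

definition besselK :: "int \<Rightarrow> real \<Rightarrow> real" where
  "besselK n x = integral {0..} (\<lambda>t. exp (- x * cosh t) * cosh (real_of_int n * t))"

definition besselD :: "int \<Rightarrow> real \<Rightarrow> real \<Rightarrow> real" where
  "besselD n x y = besselI n x * besselK n y - besselK n x * besselI n y"

definition besselD10 :: "int \<Rightarrow> real \<Rightarrow> real \<Rightarrow> real" where
  "besselD10 n x y = deriv (\<lambda>s. besselD n s y) x"

definition besselD01 :: "int \<Rightarrow> real \<Rightarrow> real \<Rightarrow> real" where
  "besselD01 n x y = deriv (\<lambda>t. besselD n x t) y"

definition besselD11 :: "int \<Rightarrow> real \<Rightarrow> real \<Rightarrow> real" where
  "besselD11 n x y = deriv (\<lambda>s. deriv (\<lambda>t. besselD n s t) y) x"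

definition det3 :: "real \<Rightarrow> real \<Rightarrow> real \<Rightarrow> real \<Rightarrow> real \<Rightarrow> real \<Rightarrow> real \<Rightarrow> real \<Rightarrow> real \<Rightarrow> real" where
  "det3 a b c d e f g h i = a * (e * i - f * h) - b * (d * i - f * g) + c * (d * h - e * g)"

text \<open>Fourier multiplier of the Neumann-to-Dirichlet map R_{sigma,rho} on mode n.\<close>
definition ntd_mult :: "real \<Rightarrow> real \<Rightarrow> int \<Rightarrow> real" where
  "ntd_mult \<sigma> \<rho> n =
     (besselI n (\<rho> / sqrt \<sigma>) * besselD01 n 1 \<rho> - \<sigma> * deriv (besselI n) (\<rho> / sqrt \<sigma>) * besselD n 1 \<rho>) /
     (besselI n (\<rho> / sqrt \<sigma>) * besselD11 n 1 \<rho> - \<sigma> * deriv (besselI n) (\<rho> / sqrt \<sigma>) * besselD10 n 1 \<rho>)"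

text \<open>Elements of H^{-1/2} of the unit circle, represented by their Fourier coefficient
  sequences g_n = (g, e^{in phi}), n in Z.\<close>
definition H_minus_half :: "(int \<Rightarrow> complex) set" where
  "H_minus_half = {g. (\<lambda>n. (cmod (g n))\<^sup>2 / sqrt (1 + (real_of_int n)\<^sup>2)) summable_on UNIV}"

definition NtD :: "real \<Rightarrow> real \<Rightarrow> (int \<Rightarrow> complex) \<Rightarrow> (int \<Rightarrow> complex)" where
  "NtD \<sigma> \<rho> g = (\<lambda>n. complex_of_real (ntd_mult \<sigma> \<rho> n) * g n)"

end

theory Submission
  imports Defs
begin

lemma pow_le_exp: fixes x::real assumes "0 \<le> x" shows "x ^ N / fact N \<le> exp x"
proof -
  have "(\<Sum>n\<in>{N}. x ^ n / fact n) \<le> (\<Sum>n. x ^ n / fact n)"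
    using assms summable_exp_generic[of x]
    by (intro sum_le_suminf) (auto simp: divide_inverse ac_simps)
  then show ?thesis by (simp add: exp_def divide_inverse ac_simps)
qed

lemma cosh_le_exp: fixes t::real assumes "0 \<le> t" shows "cosh t \<le> exp t"
  using assms by (simp add: cosh_def)

lemma cosh_int_le: fixes t::real assumes "0 \<le> t" shows "cosh (real_of_int n * t) \<le> exp (real (nat \<bar>n\<bar>) * t)"
proof -
  have "cosh (real_of_int n * t) = cosh (\<bar>real_of_int n\<bar> * t)"
    by (cases "n \<ge> 0") (auto simp: abs_if)
  also have "\<dots> \<le> exp (\<bar>real_of_int n\<bar> * t)" using assms by (intro cosh_le_exp) auto
  finally show ?thesis by simp
qed

lemma key_bound:
  fixes a t :: real
  assumes a: "0 < a" and t: "0 \<le> t"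
  shows "cosh t ^ k * cosh (real_of_int n * t) * exp (- a * cosh t)
     \<le> (fact (k + nat \<bar>n\<bar> + 1) * (2 / a) ^ (k + nat \<bar>n\<bar> + 1)) * exp (- t)"
proof -
  define N where "N = k + nat \<bar>n\<bar> + 1"
  define E where "E = exp t"
  have E: "E > 0" "E \<ge> 1" using t by (auto simp: E_def)
  have c1: "cosh t ^ k \<le> E ^ k"
    using cosh_le_exp[OF t] by (intro power_mono) (auto simp: E_def)
  have c2: "cosh (real_of_int n * t) \<le> E ^ nat \<bar>n\<bar>"
    using cosh_int_le[OF t, of n] by (simp add: E_def exp_of_nat_mult[symmetric])
  have ch: "cosh t \<ge> E / 2" by (simp add: cosh_def E_def)
  have c3: "exp (- a * cosh t) \<le> exp (- (a/2 * E))"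
    using ch a by (simp add: mult_left_mono)
  have "(a/2*E) ^ N / fact N \<le> exp (a/2*E)" using a E by (intro pow_le_exp) auto
  hence c4: "exp (- (a/2 * E)) \<le> fact N / (a/2*E) ^ N"
    using a E by (simp add: exp_minus field_simps)
  have "cosh t ^ k * cosh (real_of_int n * t) * exp (- a * cosh t) \<le> E ^ k * E ^ nat \<bar>n\<bar> * (fact N / (a/2*E) ^ N)"
    apply (intro mult_mono c1 c2 order.trans[OF c3 c4])
    using E by auto
  also have "\<dots> = fact N * (2/a) ^ N * (E ^ (k + nat \<bar>n\<bar>) / E ^ N)"
    using a E by (simp add: power_add power_mult_distrib power_divide field_simps)
  also have "E ^ (k + nat \<bar>n\<bar>) / E ^ N = exp (-t)"
    using E by (simp add: N_def E_def exp_minus field_simps)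
  finally show ?thesis by (simp add: N_def)
qed

lemma integ_K:
  fixes a :: real assumes a: "0 < a"
  shows "(\<lambda>t. cosh t ^ k * cosh (real_of_int n * t) * exp (- a * cosh t)) integrable_on {0..}"
proof (rule measurable_bounded_by_integrable_imp_integrable)
  show "(\<lambda>t. cosh t ^ k * cosh (real_of_int n * t) * exp (- a * cosh t)) \<in> borel_measurable (lebesgue_on {0..})"
    by (intro continuous_imp_measurable_on_sets_lebesgue continuous_intros) auto
  show "(\<lambda>t. (fact (k + nat \<bar>n\<bar> + 1) * (2 / a) ^ (k + nat \<bar>n\<bar> + 1)) * exp (- t)) integrable_on {0::real..}"
    proof -
      have "(\<lambda>x. exp (- 1 * x)) integrable_on {0::real..}" by (rule integrable_on_exp_minus_to_infinity) simp
      hence "(\<lambda>x. exp (- x)) integrable_on {0::real..}" by simp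
      then show ?thesis by (rule integrable_on_mult_right)
    qed
  show "norm (cosh t ^ k * cosh (real_of_int n * t) * exp (- a * cosh t)) \<le> (fact (k + nat \<bar>n\<bar> + 1) * (2 / a) ^ (k + nat \<bar>n\<bar> + 1)) * exp (- t)"
    if "t \<in> {0..}" for t
    using key_bound[OF a, of t k n] that by (simp add: abs_mult)
qed auto

lemma exp_taylor2: fixes u::real shows "\<bar>exp u - 1 - u\<bar> \<le> u^2 * exp \<bar>u\<bar>"
proof -
  have a: "exp u \<ge> 1 + u" by (rule exp_ge_add_one_self)
  have b: "exp (-u) \<ge> 1 - u" using exp_ge_add_one_self[of "-u"] by simp
  have c: "exp u * exp (-u) = 1" by (simp add: exp_minus)
  have up: "exp u - 1 - u \<le> u * (exp u - 1)"
  proof (cases "u \<le> 1")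
    case True
    have "exp u * (1 - u) \<le> exp u * exp (-u)" using b by (intro mult_left_mono) auto
    thus ?thesis using c by (simp add: algebra_simps)
  next
    case False
    have "exp u * (1 - u) \<le> 0" using False by (intro mult_nonneg_nonpos) auto
    hence "exp u - u * exp u \<le> 0" by (simp add: algebra_simps)
    moreover have "u * (exp u - 1) = u * exp u - u" by (simp add: algebra_simps)
    ultimately show ?thesis by linarith
  qed
  have d: "\<bar>exp u - 1\<bar> \<le> \<bar>u\<bar> * exp \<bar>u\<bar>"
  proof (cases "u \<ge> 0")
    case True
    have "exp u * (1 - u) \<le> 1"
      using b c by (metis mult_left_mono exp_ge_zero)
    thus ?thesis using True by (simp add: algebra_simps)
  next
    case False
    have "1 - exp u \<le> -u" using a by linarith
    also have "-u \<le> -u * exp (-u)" using False by simp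
    finally show ?thesis using False by simp
  qed
  have "\<bar>exp u - 1 - u\<bar> = exp u - 1 - u" using a by (intro abs_of_nonneg) linarith
  also have "\<dots> \<le> \<bar>u\<bar> * \<bar>exp u - 1\<bar>" using up by (metis abs_ge_self abs_mult order_trans)
  also have "\<dots> \<le> \<bar>u\<bar> * (\<bar>u\<bar> * exp \<bar>u\<bar>)" using d by (intro mult_left_mono) auto
  also have "\<dots> = u^2 * exp \<bar>u\<bar>" by (simp add: power2_eq_square)
  finally show ?thesis .
qed

lemma pointwise_bound:
  fixes x h t :: real
  assumes x: "0 < x" and h: "\<bar>h\<bar> \<le> x / 2"
  shows "\<bar>exp (- (x + h) * cosh t) * cosh (real_of_int n * t) - exp (- x * cosh t) * cosh (real_of_int n * t)
          - h * (- (cosh t * cosh (real_of_int n * t) * exp (- x * cosh t)))\<bar>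
         \<le> h^2 * (cosh t ^ 2 * cosh (real_of_int n * t) * exp (- (x/2) * cosh t))"
proof -
  define c where "c = cosh t"
  define C where "C = cosh (real_of_int n * t)"
  have c: "c \<ge> 1" unfolding c_def by (rule cosh_real_ge_1)
  have C: "C \<ge> 1" unfolding C_def by (rule cosh_real_ge_1)
  have "exp (- (x + h) * c) * C - exp (- x * c) * C - h * (- (c * C * exp (- x * c)))
      = C * exp (- x * c) * (exp (- h * c) - 1 - (- h * c))"
    by (simp add: algebra_simps exp_add[symmetric])
  hence "\<bar>exp (- (x + h) * c) * C - exp (- x * c) * C - h * (- (c * C * exp (- x * c)))\<bar>
      = C * exp (- x * c) * \<bar>exp (- h * c) - 1 - (- h * c)\<bar>"
    using C by (simp add: abs_mult)
  also have "\<dots> \<le> C * exp (- x * c) * ((- h * c)^2 * exp \<bar>- h * c\<bar>)"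
    using C by (intro mult_left_mono exp_taylor2) auto
  also have "exp \<bar>- h * c\<bar> \<le> exp ((x/2) * c)"
    using c h by (auto simp: abs_mult intro!: mult_right_mono)
  hence "C * exp (- x * c) * ((- h * c)^2 * exp \<bar>- h * c\<bar>) \<le> C * exp (- x * c) * ((- h * c)^2 * exp ((x/2) * c))"
    using C by (intro mult_left_mono) auto
  also have "\<dots> = h^2 * (c^2 * C * exp (- (x/2) * c))"
    by (simp add: power2_eq_square algebra_simps exp_add[symmetric])
  finally show ?thesis unfolding c_def C_def .
qed

definition Kd :: "int \<Rightarrow> real \<Rightarrow> real" where
  "Kd n x = - integral {0..} (\<lambda>t. cosh t * cosh (real_of_int n * t) * exp (- x * cosh t))"

lemma integ_F: assumes "0 < y" shows "(\<lambda>t. exp (- y * cosh t) * cosh (real_of_int n * t)) integrable_on {0..}"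
  using integ_K[OF assms, of 0 n] by (simp add: mult.commute)

lemma integ_G: assumes "0 < y" shows "(\<lambda>t. cosh t * cosh (real_of_int n * t) * exp (- y * cosh t)) integrable_on {0..}"
  using integ_K[OF assms, of 1 n] by simp

lemma besselK_deriv:
  assumes x: "0 < x"
  shows "(besselK n has_real_derivative Kd n x) (at x)"
proof -
  define F where "F = (\<lambda>y t. exp (- y * cosh t) * cosh (real_of_int n * t))"
  define G where "G = (\<lambda>t. cosh t * cosh (real_of_int n * t) * exp (- x * cosh t))"
  define B where "B = (\<lambda>t. cosh t ^ 2 * cosh (real_of_int n * t) * exp (- (x/2) * cosh t))"
  define IB where "IB = integral {0..} B"
  have iB: "B integrable_on {0..}" unfolding B_def using x by (intro integ_K) auto
  have iG: "G integrable_on {0..}" unfolding G_def using x by (intro integ_G)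
  have iF: "F y integrable_on {0..}" if "y > 0" for y unfolding F_def using that by (intro integ_F)
  have K: "besselK n y = integral {0..} (F y)" for y unfolding besselK_def F_def ..
  have Kdx: "Kd n x = - integral {0..} G" unfolding Kd_def G_def ..
  have ev: "\<forall>\<^sub>F y in at x. norm ((besselK n y - besselK n x) / (y - x) - Kd n x) \<le> \<bar>y - x\<bar> * IB"
    unfolding eventually_at
  proof (intro exI[of _ "x/2"] conjI ballI impI)
    show "x / 2 > 0" using x by simp
    fix y assume "y \<noteq> x \<and> dist y x < x / 2"
    hence yx: "y \<noteq> x" and d: "\<bar>y - x\<bar> < x/2" by (auto simp: dist_real_def)
    define h where "h = y - x"
    have h0: "h \<noteq> 0" using yx by (simp add: h_def)
    have y: "y > 0" using d x by linarith
    have eq: "besselK n y - besselK n x - h * Kd n x = integral {0..} (\<lambda>t. F y t - F x t - h * (- G t))"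
    proof -
      have "integral {0..} (\<lambda>t. F y t - F x t - h * (- G t)) = integral {0..} (\<lambda>t. (F y t - F x t) + h * G t)"
        by simp
      also have "\<dots> = integral {0..} (\<lambda>t. F y t - F x t) + integral {0..} (\<lambda>t. h * G t)"
        using iF[OF y] iF[OF x] iG by (intro integral_add integrable_diff integrable_on_mult_right)
      also have "integral {0..} (\<lambda>t. F y t - F x t) = integral {0..} (F y) - integral {0..} (F x)"
        using iF[OF y] iF[OF x] by (rule integral_diff)
      also have "integral {0..} (\<lambda>t. h * G t) = h * integral {0..} G" by simp
      finally show ?thesis unfolding K Kdx by simp
    qed
    have "norm (integral {0..} (\<lambda>t. F y t - F x t - h * (- G t))) \<le> integral {0..} (\<lambda>t. h^2 * B t)"
    proof (rule integral_norm_bound_integral)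
      show "(\<lambda>t. F y t - F x t - h * (- G t)) integrable_on {0..}"
        using iF[OF y] iF[OF x] iG
        by (intro integrable_diff integrable_on_mult_right integrable_neg)
      show "(\<lambda>t. h^2 * B t) integrable_on {0..}" using iB by (rule integrable_on_mult_right)
      fix t :: real
      have "y = x + h" by (simp add: h_def)
      then show "norm (F y t - F x t - h * (- G t)) \<le> h^2 * B t"
        using pointwise_bound[OF x, of h t n] d unfolding F_def G_def B_def h_def by simp
    qed
    also have "\<dots> = h^2 * IB" unfolding IB_def by simp
    finally have "\<bar>besselK n y - besselK n x - h * Kd n x\<bar> \<le> h^2 * IB" using eq by simp
    moreover have "(besselK n y - besselK n x) / (y - x) - Kd n x = (besselK n y - besselK n x - h * Kd n x) / h"
      using h0 by (simp add: h_def field_simps)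
    ultimately show "norm ((besselK n y - besselK n x) / (y - x) - Kd n x) \<le> \<bar>y - x\<bar> * IB"
      using h0 by (simp add: abs_divide divide_le_eq power2_eq_square h_def[symmetric] mult.commute mult.left_commute)
  qed
  have lim: "((\<lambda>y. \<bar>y - x\<bar> * IB) \<longlongrightarrow> 0) (at x)"
  proof -
    have "((\<lambda>y. \<bar>y - x\<bar> * IB) \<longlongrightarrow> \<bar>x - x\<bar> * IB) (at x)"
      by (intro tendsto_intros)
    thus ?thesis by simp
  qed
  have "((\<lambda>y. (besselK n y - besselK n x) / (y - x) - Kd n x) \<longlongrightarrow> 0) (at x)"
    by (rule Lim_null_comparison[OF ev lim])
  hence "((\<lambda>y. (besselK n y - besselK n x) / (y - x)) \<longlongrightarrow> Kd n x) (at x)"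
    by (simp add: LIM_zero_iff)
  thus ?thesis by (simp add: has_field_derivative_iff)
qed

lemma besselK_nonneg: assumes "0 < x" shows "0 \<le> besselK n x"
  unfolding besselK_def
  by (intro integral_nonneg integ_F assms) (auto intro: mult_nonneg_nonneg order.trans[OF zero_le_one cosh_real_ge_1])

lemma Kd_neg: assumes x: "0 < x" shows "Kd n x < 0"
proof -
  define G where "G = (\<lambda>t. cosh t * cosh (real_of_int n * t) * exp (- x * cosh t))"
  have G0: "G t \<ge> 0" for t unfolding G_def
    by (intro mult_nonneg_nonneg) (auto intro: order.trans[OF zero_le_one cosh_real_ge_1])
  have "exp (- x * cosh 1) = integral {0..1} (\<lambda>t::real. exp (- x * cosh 1))" by simp
  also have "\<dots> \<le> integral {0..1} G"
  proof (rule integral_le)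
    show "(\<lambda>t::real. exp (- x * cosh 1)) integrable_on {0..1}" by (rule integrable_const_ivl)
    show "G integrable_on {0..1}" unfolding G_def
      by (intro integrable_continuous_interval continuous_intros)
    fix t :: real assume t: "t \<in> {0..1}"
    have c1: "cosh t \<le> cosh 1" using t by (simp add: cosh_real_nonneg_le_iff)
    have "exp (- x * cosh 1) \<le> exp (- x * cosh t)" using c1 x by simp
    also have "\<dots> \<le> cosh t * cosh (real_of_int n * t) * exp (- x * cosh t)"
    proof -
      have "1 \<le> cosh t * cosh (real_of_int n * t)"
        using cosh_real_ge_1[of t] cosh_real_ge_1[of "real_of_int n * t"]
        by (metis mult_mono mult_1_left zero_le_one order.trans)
      thus ?thesis by (metis exp_ge_zero mult_right_mono mult_1_left)
    qed
    finally show "exp (- x * cosh 1) \<le> G t" unfolding G_def .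
  qed
  also have "\<dots> \<le> integral {0..} G"
  proof (rule integral_subset_le)
    show "G integrable_on {0..1}" unfolding G_def
      by (intro integrable_continuous_interval continuous_intros)
    show "G integrable_on {0..}" unfolding G_def using x by (rule integ_G)
  qed (use G0 in auto)
  finally have "0 < integral {0..} G" by (metis exp_gt_zero order_less_le_trans)
  thus ?thesis unfolding Kd_def G_def by simp
qed

definition cI :: "nat \<Rightarrow> nat \<Rightarrow> real" where "cI m k = 1 / (fact k * fact (k + m))"
definition FI :: "nat \<Rightarrow> real \<Rightarrow> real" where "FI m y = (\<Sum>k. cI m k * y ^ k)"
definition FId :: "nat \<Rightarrow> real \<Rightarrow> real" where "FId m y = (\<Sum>k. diffs (cI m) k * y ^ k)"

lemma cI_pos: "cI m k > 0" by (simp add: cI_def)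

lemma summ_FI: "summable (\<lambda>k. cI m k * y ^ k)"
proof (rule summable_comparison_test'[OF summable_exp[of "\<bar>y\<bar>"]])
  fix k :: nat
  have "fact (k + m) \<ge> (1::real)" by simp
  hence "cI m k \<le> inverse (fact k)" unfolding cI_def
    by (simp add: divide_simps)
  hence "cI m k * \<bar>y\<bar> ^ k \<le> inverse (fact k) * \<bar>y\<bar> ^ k" by (intro mult_right_mono) auto
  thus "norm (cI m k * y ^ k) \<le> inverse (fact k) * \<bar>y\<bar> ^ k"
    using cI_pos[of m k] by (simp add: abs_mult power_abs)
qed

lemma FI_deriv: "(FI m has_real_derivative FId m y) (at y)"
  unfolding FI_def FId_def by (rule termdiffs_strong_converges_everywhere[OF summ_FI])

lemma FI_pos: "0 \<le> y \<Longrightarrow> 0 < FI m y"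
  unfolding FI_def
  by (rule suminf_pos2[OF summ_FI, of _ _ 0]) (auto intro: mult_nonneg_nonneg less_imp_le[OF cI_pos] cI_pos)

lemma FId_nonneg: "0 \<le> y \<Longrightarrow> 0 \<le> FId m y"
  unfolding FId_def
  by (rule suminf_nonneg[OF termdiff_converges_all[OF summ_FI]])
     (auto simp: diffs_def intro!: mult_nonneg_nonneg less_imp_le[OF cI_pos])

lemma besselI_eq: "besselI n = (\<lambda>x. (x/2) ^ nat \<bar>n\<bar> * FI (nat \<bar>n\<bar>) ((x/2)^2))"
proof
  fix x :: real
  define m where "m = nat \<bar>n\<bar>"
  have "besselI n x = (\<Sum>k. (x/2)^m * (cI m k * ((x/2)^2)^k))"
    unfolding besselI_def m_def[symmetric]
    by (intro suminf_cong) (simp add: cI_def power_add power_mult[symmetric] mult.commute)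
  also have "\<dots> = (x/2)^m * FI m ((x/2)^2)"
    unfolding FI_def by (rule suminf_mult[OF summ_FI])
  finally show "besselI n x = (x/2) ^ nat \<bar>n\<bar> * FI (nat \<bar>n\<bar>) ((x/2)^2)" by (simp add: m_def)
qed

lemma besselI_pos: "0 < x \<Longrightarrow> 0 < besselI n x"
  unfolding besselI_eq by (intro mult_pos_pos FI_pos) auto

lemma besselI_deriv_ex: "\<exists>D. (besselI n has_real_derivative D) (at x) \<and> (0 < x \<longrightarrow> 0 \<le> D)"
proof -
  define m where "m = nat \<bar>n\<bar>"
  define D where "D = (real m * (x/2)^(m - 1) * (1/2)) * FI m ((x/2)^2) + (x/2)^m * (FId m ((x/2)^2) * (real 2 * (x/2)^(2-1) * (1/2)))"
  have d1: "((\<lambda>x. (x/2)^m) has_real_derivative (real m * (x/2)^(m - 1) * (1/2))) (at x)"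
    by (rule derivative_eq_intros refl | simp)+
  have d2: "((\<lambda>x. (x/2)^2) has_real_derivative (real 2 * (x/2)^(2-1) * (1/2))) (at x)"
    by (rule derivative_eq_intros refl | simp)+
  have d3: "((\<lambda>x. FI m ((x/2)^2)) has_real_derivative FId m ((x/2)^2) * (real 2 * (x/2)^(2-1) * (1/2))) (at x)"
    by (rule DERIV_chain2[OF FI_deriv d2])
  have "(besselI n has_real_derivative D) (at x)"
    unfolding besselI_eq m_def[symmetric] D_def by (rule DERIV_cong[OF DERIV_mult[OF d1 d3]]) (simp add: algebra_simps)
  moreover have "0 < x \<longrightarrow> 0 \<le> D"
    unfolding D_def
    by (auto intro!: add_nonneg_nonneg mult_nonneg_nonneg less_imp_le[OF FI_pos] FId_nonneg)
  ultimately show ?thesis by blast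
qed

lemma besselI_deriv: "(besselI n has_real_derivative deriv (besselI n) x) (at x)"
  using besselI_deriv_ex[of n x] DERIV_imp_deriv by metis

lemma besselI_deriv_nonneg: "0 < x \<Longrightarrow> 0 \<le> deriv (besselI n) x"
  using besselI_deriv_ex[of n x] DERIV_imp_deriv by metis

lemma K_deriv_eq: "0 < x \<Longrightarrow> deriv (besselK n) x = Kd n x"
  by (rule DERIV_imp_deriv[OF besselK_deriv])

lemma D10_eq: assumes "0 < x" shows
  "besselD10 n x y = deriv (besselI n) x * besselK n y - Kd n x * besselI n y"
  unfolding besselD10_def besselD_def
  by (rule DERIV_imp_deriv) (rule derivative_eq_intros besselI_deriv besselK_deriv[OF assms] refl | simp)+

lemma D01_eq: assumes "0 < y" shows
  "besselD01 n x y = besselI n x * Kd n y - besselK n x * deriv (besselI n) y"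
  unfolding besselD01_def besselD_def
  by (rule DERIV_imp_deriv) (rule derivative_eq_intros besselI_deriv besselK_deriv[OF assms] refl | simp)+

lemma D11_eq: assumes "0 < x" "0 < y" shows
  "besselD11 n x y = deriv (besselI n) x * Kd n y - Kd n x * deriv (besselI n) y"
proof -
  have "(\<lambda>s. deriv (\<lambda>t. besselD n s t) y) = (\<lambda>s. besselI n s * Kd n y - besselK n s * deriv (besselI n) y)"
    using D01_eq[OF assms(2)] unfolding besselD01_def by auto
  note eq = this
  show ?thesis unfolding besselD11_def eq
    by (rule DERIV_imp_deriv) (rule derivative_eq_intros besselI_deriv besselK_deriv[OF assms(1)] refl | simp)+
qed

lemma ratio_eq:
  fixes A B C E p1 q1 p2 q2 :: real
  assumes "q1 \<noteq> 0" "q2 \<noteq> 0" "p1 * q2 = q1 * p2"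
  shows "(A*q1 - B*p1)/(C*q1 - E*p1) = (A*q2 - B*p2)/(C*q2 - E*p2)"
proof -
  define c where "c = q1 / q2"
  have c0: "c \<noteq> 0" using assms by (simp add: c_def)
  have q1: "q1 = c * q2" using assms by (simp add: c_def)
  have p1: "p1 = c * p2" using assms by (simp add: c_def field_simps)
  have "(A*q1 - B*p1)/(C*q1 - E*p1) = (c * (A*q2 - B*p2))/(c * (C*q2 - E*p2))"
    unfolding q1 p1 by (simp add: algebra_simps)
  also have "\<dots> = (A*q2 - B*p2)/(C*q2 - E*p2)" using c0 by simp
  finally show ?thesis .
qed

lemma ntd_mult_eq:
  fixes n :: int
  assumes r: "0 < r" and s: "0 < \<sigma>"
  defines "a \<equiv> besselI n (r / sqrt \<sigma>)" and "b \<equiv> \<sigma> * deriv (besselI n) (r / sqrt \<sigma>)"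
  shows "ntd_mult \<sigma> r n =
    (besselI n 1 * (a * Kd n r - b * besselK n r) - besselK n 1 * (a * deriv (besselI n) r - b * besselI n r)) /
    (deriv (besselI n) 1 * (a * Kd n r - b * besselK n r) - Kd n 1 * (a * deriv (besselI n) r - b * besselI n r))"
  unfolding ntd_mult_def a_def[symmetric] b_def D01_eq[OF r] D11_eq[OF zero_less_one r] D10_eq[OF zero_less_one] besselD_def
  by (simp add: algebra_simps)

lemma q_neg:
  assumes r: "0 < r" and s: "0 < \<sigma>"
  shows "besselI n (r / sqrt \<sigma>) * Kd n r - \<sigma> * deriv (besselI n) (r / sqrt \<sigma>) * besselK n r < 0"
proof -
  have p: "r / sqrt \<sigma> > 0" using r s by simp
  have "besselI n (r / sqrt \<sigma>) * Kd n r < 0"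
    using besselI_pos[OF p] Kd_neg[OF r] by (simp add: mult_pos_neg)
  moreover have "0 \<le> \<sigma> * deriv (besselI n) (r / sqrt \<sigma>) * besselK n r"
    using besselI_deriv_nonneg[OF p] besselK_nonneg[OF r] s by simp
  ultimately show ?thesis by linarith
qed

theorem theorem2p3:
  fixes r1 r2 \<sigma>1 \<sigma>2 :: real
  assumes "0 < r1" "r1 < 1" "0 < r2" "r2 < 1" "0 < \<sigma>1" "0 < \<sigma>2"
    and "\<forall>n::int. det3
           (besselD10 n r1 r2) (\<sigma>1 * deriv (besselI n) (r1 / sqrt \<sigma>1)) (besselD11 n r1 r2)
           (besselI n (r2 / sqrt \<sigma>2)) 0 (\<sigma>2 * deriv (besselI n) (r2 / sqrt \<sigma>2))
           (besselD n r1 r2) (besselI n (r1 / sqrt \<sigma>1)) (besselD01 n r1 r2) = 0"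
  shows "\<forall>g \<in> H_minus_half. NtD \<sigma>1 r1 g = NtD \<sigma>2 r2 g"
proof -
  have "ntd_mult \<sigma>1 r1 n = ntd_mult \<sigma>2 r2 n" for n
  proof -
    define a1 where "a1 = besselI n (r1 / sqrt \<sigma>1)"
    define b1 where "b1 = \<sigma>1 * deriv (besselI n) (r1 / sqrt \<sigma>1)"
    define a2 where "a2 = besselI n (r2 / sqrt \<sigma>2)"
    define b2 where "b2 = \<sigma>2 * deriv (besselI n) (r2 / sqrt \<sigma>2)"
    define p1 where "p1 = a1 * deriv (besselI n) r1 - b1 * besselI n r1"
    define q1 where "q1 = a1 * Kd n r1 - b1 * besselK n r1"
    define p2 where "p2 = a2 * deriv (besselI n) r2 - b2 * besselI n r2"
    define q2 where "q2 = a2 * Kd n r2 - b2 * besselK n r2"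
    have q1: "q1 \<noteq> 0" unfolding q1_def a1_def b1_def using q_neg[OF assms(1,5), of n] by (simp add: mult.assoc)
    have q2: "q2 \<noteq> 0" unfolding q2_def a2_def b2_def using q_neg[OF assms(3,6), of n] by (simp add: mult.assoc)
    have det: "det3
           (besselD10 n r1 r2) (\<sigma>1 * deriv (besselI n) (r1 / sqrt \<sigma>1)) (besselD11 n r1 r2)
           (besselI n (r2 / sqrt \<sigma>2)) 0 (\<sigma>2 * deriv (besselI n) (r2 / sqrt \<sigma>2))
           (besselD n r1 r2) (besselI n (r1 / sqrt \<sigma>1)) (besselD01 n r1 r2) = p1 * q2 - q1 * p2"
      unfolding a1_def[symmetric] b1_def[symmetric] a2_def[symmetric] b2_def[symmetric]
        p1_def q1_def p2_def q2_def det3_def besselD_def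
        D10_eq[OF assms(1)] D01_eq[OF assms(3)] D11_eq[OF assms(1,3)]
      by (simp add: algebra_simps)
    have pq: "p1 * q2 = q1 * p2" using det assms(7) by simp
    show ?thesis
      unfolding ntd_mult_eq[OF assms(1,5)] ntd_mult_eq[OF assms(3,6)]
      unfolding a1_def[symmetric] b1_def[symmetric] a2_def[symmetric] b2_def[symmetric]
        p1_def[symmetric] q1_def[symmetric] p2_def[symmetric] q2_def[symmetric]
      by (rule ratio_eq[OF q1 q2 pq])
  qed
  thus ?thesis unfolding NtD_def by simp
qed

end
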